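(* Let $\mathbb S$ be the free semigroup action on the compact metric space $X$ generated by continuous maps $g_1,\dots,g_p$, and let $K\subset X$ be closed. (i) If $h_{top}(K,\mathbb S)>0$, then $K\cap E_p(X,\mathbb S)\neq\emptyset$. (ii) If $h_{top}(K,\mathbb S)=h_{top}(X,\mathbb S)$, then $K\cap E^f_p(X,\mathbb S)\neq\emptyset$.
   Context: Setting: $(X,d)$ compact metric space, $g_1,\dots,g_p:X\to X$ continuous; $G_n^*$ the set of words $\underline g=g_{i_n}\cdots g_{i_1}$, $i_j\in\{1,\dots,p\}$; $d_{\underline g}(x,y)=\max_{0\le j\le n}d(g_{i_j}\cdots g_{i_1}x,g_{i_j}\cdots g_{i_1}y)$; $s(K,\underline g,\varepsilon)$ the maximal cardinality of a $(\underline g,\varepsilon)$-separated subset of $K$; $h_{top}(K,\mathbb S)=\lim_{\varepsilon\to0}\limsup_n\frac1n\log\big(p^{-n}\sum_{\underline g\in G_n^*}s(K,\underline g,\varepsilon)\big)$. $E_p(X,\mathbb S)$: points $x_0$ with $h_{top}(N,\mathbb S)>0$ for every closed neighbourhood $N$ of $x_0$. $E^f_p(X,\mathbb S)$: points $x_0$ with $h_{top}(N,\mathbb S)=h_{top}(X,\mathbb S)$ for every closed neighbourhood $N$ of $x_0$. *)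

theory Defs
  imports "HOL-Analysis.Analysis"
begin

text \<open>Generators are g 0, ..., g (p-1). A word i_1 ... i_n (applied i_1 first)
  is the list [i_1, ..., i_n].\<close>

definition words :: "nat \<Rightarrow> nat \<Rightarrow> nat list set" where
  "words p n = {w. length w = n \<and> set w \<subseteq> {0..<p}}"

definition word_orbit :: "(nat \<Rightarrow> 'a \<Rightarrow> 'a) \<Rightarrow> nat list \<Rightarrow> nat \<Rightarrow> 'a \<Rightarrow> 'a" where
  "word_orbit g w j x = fold g (take j w) x"

definition word_dist :: "(nat \<Rightarrow> 'a::metric_space \<Rightarrow> 'a) \<Rightarrow> nat list \<Rightarrow> 'a \<Rightarrow> 'a \<Rightarrow> real" where
  "word_dist g w x y =
     Max ((\<lambda>j. dist (word_orbit g w j x) (word_orbit g w j y)) ` {0..length w})"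

definition word_separated ::
  "(nat \<Rightarrow> 'a::metric_space \<Rightarrow> 'a) \<Rightarrow> nat list \<Rightarrow> real \<Rightarrow> 'a set \<Rightarrow> bool" where
  "word_separated g w \<epsilon> E \<longleftrightarrow> (\<forall>x\<in>E. \<forall>y\<in>E. x \<noteq> y \<longrightarrow> word_dist g w x y > \<epsilon>)"

definition sep_card ::
  "(nat \<Rightarrow> 'a::metric_space \<Rightarrow> 'a) \<Rightarrow> 'a set \<Rightarrow> nat list \<Rightarrow> real \<Rightarrow> nat" where
  "sep_card g K w \<epsilon> = Sup {card E | E. finite E \<and> E \<subseteq> K \<and> word_separated g w \<epsilon> E}"

definition eln :: "real \<Rightarrow> ereal" where
  "eln x = (if x > 0 then ereal (ln x) else -\<infinity>)"

definition top_entropy ::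
  "(nat \<Rightarrow> 'a::metric_space \<Rightarrow> 'a) \<Rightarrow> nat \<Rightarrow> 'a set \<Rightarrow> ereal" where
  "top_entropy g p K =
     Lim (at_right (0::real))
       (\<lambda>\<epsilon>. limsup (\<lambda>n. ereal (1 / real n) *
          eln (inverse (real p ^ n) * (\<Sum>w\<in>words p n. real (sep_card g K w \<epsilon>)))))"

definition closed_nbhd :: "'a::metric_space set \<Rightarrow> 'a \<Rightarrow> 'a set \<Rightarrow> bool" where
  "closed_nbhd X x0 N \<longleftrightarrow> closed N \<and> N \<subseteq> X \<and> (\<exists>e>0. X \<inter> ball x0 e \<subseteq> N)"

definition entropy_points ::
  "'a::metric_space set \<Rightarrow> (nat \<Rightarrow> 'a \<Rightarrow> 'a) \<Rightarrow> nat \<Rightarrow> 'a set" where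
  "entropy_points X g p =
     {x0 \<in> X. \<forall>N. closed_nbhd X x0 N \<longrightarrow> top_entropy g p N > 0}"

definition full_entropy_points ::
  "'a::metric_space set \<Rightarrow> (nat \<Rightarrow> 'a \<Rightarrow> 'a) \<Rightarrow> nat \<Rightarrow> 'a set" where
  "full_entropy_points X g p =
     {x0 \<in> X. \<forall>N. closed_nbhd X x0 N \<longrightarrow> top_entropy g p N = top_entropy g p X}"

end

theory Submission
  imports Defs
begin

definition xv :: "(nat \<Rightarrow> 'a::metric_space \<Rightarrow> 'a) \<Rightarrow> nat \<Rightarrow> 'a set \<Rightarrow> nat \<Rightarrow> real \<Rightarrow> real" where
  "xv g p A n \<epsilon> = inverse (real p ^ n) * (\<Sum>w\<in>words p n. real (sep_card g A w \<epsilon>))"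

definition aa :: "(nat \<Rightarrow> 'a::metric_space \<Rightarrow> 'a) \<Rightarrow> nat \<Rightarrow> 'a set \<Rightarrow> real \<Rightarrow> nat \<Rightarrow> ereal" where
  "aa g p A \<epsilon> = (\<lambda>n. ereal (1 / real n) * eln (xv g p A n \<epsilon>))"

definition Fe :: "(nat \<Rightarrow> 'a::metric_space \<Rightarrow> 'a) \<Rightarrow> nat \<Rightarrow> 'a set \<Rightarrow> real \<Rightarrow> ereal" where
  "Fe g p A = (\<lambda>\<epsilon>. limsup (aa g p A \<epsilon>))"

lemma top_Fe: "top_entropy g p A = Lim (at_right 0) (Fe g p A)"
  unfolding top_entropy_def Fe_def aa_def xv_def ..

lemma words_finite: "finite (words p n)"
  using finite_lists_length_eq[OF finite_atLeastLessThan, of 0 p n]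
  unfolding words_def by (simp add: conj_commute)

lemma words_card: "card (words p n) = p ^ n"
  using card_lists_length_eq[OF finite_atLeastLessThan, of 0 p n]
  unfolding words_def by (simp add: conj_commute)

lemma eln_mono: "x \<le> y \<Longrightarrow> eln x \<le> eln y"
  unfolding eln_def by auto

lemma aa_pos: "n \<ge> 1 \<Longrightarrow> x > 0 \<Longrightarrow> ereal (1 / real n) * eln x = ereal (ln x / real n)"
  unfolding eln_def by simp

lemma aa_npos: "n \<ge> 1 \<Longrightarrow> x \<le> 0 \<Longrightarrow> ereal (1 / real n) * eln x = -\<infinity>"
  unfolding eln_def by simp

lemma aa_un:
  fixes xU xA xB :: real
  assumes n: "n \<ge> 1" and le: "xU \<le> xA + xB" and "0 \<le> xA" "0 \<le> xB"
  shows "ereal (1 / real n) * eln xU \<le> ereal (ln 2 / real n) +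
     max (ereal (1 / real n) * eln xA) (ereal (1 / real n) * eln xB)"
proof (cases "xU \<le> 0")
  case True then show ?thesis using aa_npos[OF n True] by simp
next
  case False
  have key: "ereal (1 / real n) * eln xU \<le> ereal (ln 2 / real n) + ereal (1 / real n) * eln m"
    if "xA \<le> m" "xB \<le> m" for m
  proof -
    have m: "m > 0" using False le that by linarith
    have "ln xU \<le> ln (2 * m)" using False le that by (subst ln_le_cancel_iff) auto
    also have "\<dots> = ln 2 + ln m" using m by (simp add: ln_mult)
    finally have "ln xU / real n \<le> ln 2 / real n + ln m / real n"
      using n by (simp add: divide_right_mono add_divide_distrib[symmetric])
    then show ?thesis using aa_pos[OF n] False m by simp
  qed
  have "ereal (1 / real n) * eln xU \<le> ereal (ln 2 / real n) + ereal (1 / real n) * eln (max xA xB)"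
    by (intro key) auto
  moreover have "ereal (1 / real n) * eln (max xA xB) \<le>
     max (ereal (1 / real n) * eln xA) (ereal (1 / real n) * eln xB)"
    by (cases "xB \<le> xA") (auto simp: max_def)
  ultimately show ?thesis by (meson add_left_mono order.trans)
qed

lemma limsup_max_le:
  fixes u v :: "nat \<Rightarrow> ereal"
  shows "limsup (\<lambda>n. max (u n) (v n)) \<le> max (limsup u) (limsup v)"
proof (rule dense_ge)
  fix y assume y: "max (limsup u) (limsup v) < y"
  then have "eventually (\<lambda>n. u n < y) sequentially" "eventually (\<lambda>n. v n < y) sequentially"
    by (auto intro: Limsup_lessD)
  then have "eventually (\<lambda>n. max (u n) (v n) \<le> y) sequentially"
    by eventually_elim auto
  then show "limsup (\<lambda>n. max (u n) (v n)) \<le> y" by (rule Limsup_bounded)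
qed

lemma limsup_ln2: "limsup (\<lambda>n. ereal (ln 2 / real n)) = 0"
proof -
  have "(\<lambda>n. ereal (ln 2 / real n)) \<longlonglongrightarrow> ereal 0"
    by (intro tendsto_ereal lim_const_over_n)
  then show ?thesis by (simp add: lim_imp_Limsup zero_ereal_def)
qed

lemma Lim_antitone:
  fixes F :: "real \<Rightarrow> ereal"
  assumes "\<And>a b. 0 < a \<Longrightarrow> a \<le> b \<Longrightarrow> F b \<le> F a"
  shows "Lim (at_right 0) F = (SUP e\<in>{0<..}. F e)"
proof (rule tendsto_Lim)
  show "\<not> trivial_limit (at_right (0::real))" by simp
  show "(F \<longlongrightarrow> (SUP e\<in>{0<..}. F e)) (at_right 0)"
  proof (rule order_tendstoI)
    fix y assume "y < (SUP e\<in>{0<..}. F e)"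
    then obtain e where e: "e > 0" "y < F e" by (auto simp: less_SUP_iff)
    show "eventually (\<lambda>x. y < F x) (at_right 0)"
      unfolding eventually_at_right_field
      using e assms by (intro exI[of _ e]) (auto intro: less_le_trans)
  next
    fix y assume "(SUP e\<in>{0<..}. F e) < y"
    then have "\<And>x. x > 0 \<Longrightarrow> F x < y"
      by (meson SUP_upper greaterThan_iff le_less_trans)
    then show "eventually (\<lambda>x. F x < y) (at_right 0)"
      using eventually_at_right_less[of 0] by (auto elim: eventually_mono)
  qed
qed

locale setting =
  fixes X :: "'a::metric_space set" and g :: "nat \<Rightarrow> 'a \<Rightarrow> 'a" and p :: nat
  assumes cX: "compact X" and p1: "p \<ge> 1"
    and cont: "\<And>i. i < p \<Longrightarrow> continuous_on X (g i)"
    and img: "\<And>i. i < p \<Longrightarrow> g i ` X \<subseteq> X"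
begin

lemma fold_cont: "set l \<subseteq> {0..<p} \<Longrightarrow> continuous_on X (fold g l) \<and> fold g l ` X \<subseteq> X"
proof (induction l)
  case Nil then show ?case by simp
next
  case (Cons a l)
  then have a: "a < p" and IH: "continuous_on X (fold g l)" "fold g l ` X \<subseteq> X" by auto
  have "continuous_on X (fold g l \<circ> g a)"
    by (rule continuous_on_compose[OF cont[OF a]]) (rule continuous_on_subset[OF IH(1) img[OF a]])
  moreover have "(fold g l \<circ> g a) ` X \<subseteq> X" using IH(2) img[OF a] by (auto simp: image_subset_iff)
  ultimately show ?case by (simp only: fold_Cons)
qed

lemma orb_cont: "set w \<subseteq> {0..<p} \<Longrightarrow> continuous_on X (word_orbit g w j)"
proof -
  assume w: "set w \<subseteq> {0..<p}"
  have "word_orbit g w j = fold g (take j w)" by (rule ext) (simp add: word_orbit_def)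
  moreover have "set (take j w) \<subseteq> {0..<p}" using set_take_subset[of j w] w by (rule order_trans)
  ultimately show ?thesis using fold_cont by auto
qed

lemma dist_lt: "(\<And>j. j \<le> length w \<Longrightarrow> dist (word_orbit g w j x) (word_orbit g w j y) < e)
   \<Longrightarrow> word_dist g w x y < e"
  unfolding word_dist_def by (subst Max_less_iff) auto

lemma sep_bound:
  assumes w: "set w \<subseteq> {0..<p}" and e: "\<epsilon> > 0"
  shows "\<exists>M. \<forall>E. E \<subseteq> X \<longrightarrow> word_separated g w \<epsilon> E \<longrightarrow> finite E \<and> card E \<le> M"
proof -
  have hd: "\<forall>x\<in>X. \<exists>d>0. \<forall>y\<in>X. dist y x < d \<longrightarrow>
          (\<forall>j\<in>{0..length w}. dist (word_orbit g w j y) (word_orbit g w j x) < \<epsilon>/2)"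
  proof
    fix x assume x: "x \<in> X"
    have "\<forall>j\<in>{0..length w}. eventually (\<lambda>y. dist (word_orbit g w j y) (word_orbit g w j x) < \<epsilon>/2) (at x within X)"
    proof
      fix j
      have "(word_orbit g w j \<longlongrightarrow> word_orbit g w j x) (at x within X)"
        using orb_cont[OF w, of j] x by (simp add: continuous_on_def)
      then show "eventually (\<lambda>y. dist (word_orbit g w j y) (word_orbit g w j x) < \<epsilon>/2) (at x within X)"
        by (rule tendstoD) (simp add: e)
    qed
    then have "eventually (\<lambda>y. \<forall>j\<in>{0..length w}. dist (word_orbit g w j y) (word_orbit g w j x) < \<epsilon>/2) (at x within X)"
      by (intro eventually_ball_finite) auto
    then obtain d where d: "d > 0" "\<forall>y\<in>X. y \<noteq> x \<and> dist y x < d \<longrightarrow>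
        (\<forall>j\<in>{0..length w}. dist (word_orbit g w j y) (word_orbit g w j x) < \<epsilon>/2)"
      by (auto simp: eventually_at)
    show "\<exists>d>0. \<forall>y\<in>X. dist y x < d \<longrightarrow>
          (\<forall>j\<in>{0..length w}. dist (word_orbit g w j y) (word_orbit g w j x) < \<epsilon>/2)"
      using d e by (intro exI[of _ d]) auto
  qed
  obtain d where dd: "\<forall>x\<in>X. d x > 0 \<and> (\<forall>y\<in>X. dist y x < d x \<longrightarrow>
          (\<forall>j\<in>{0..length w}. dist (word_orbit g w j y) (word_orbit g w j x) < \<epsilon>/2))"
    using bchoice[OF hd] by blast
  have d: "\<And>x. x \<in> X \<Longrightarrow> d x > 0"
    "\<And>x y j. x \<in> X \<Longrightarrow> y \<in> X \<Longrightarrow> dist y x < d x \<Longrightarrow> j \<le> length w \<Longrightarrow>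
        dist (word_orbit g w j y) (word_orbit g w j x) < \<epsilon>/2"
    using dd by auto
  have "X \<subseteq> (\<Union>x\<in>X. ball x (d x))" using d(1) by auto
  then obtain C where C: "C \<subseteq> X" "finite C" "X \<subseteq> (\<Union>x\<in>C. ball x (d x))"
    using compactE_image[OF cX, of X "\<lambda>x. ball x (d x)"] by auto
  show ?thesis
  proof (intro exI[of _ "card C"] allI impI)
    fix E assume E: "E \<subseteq> X" and sep: "word_separated g w \<epsilon> E"
    define \<phi> where "\<phi> e = (SOME c. c \<in> C \<and> e \<in> ball c (d c))" for e
    have \<phi>: "\<phi> e \<in> C \<and> e \<in> ball (\<phi> e) (d (\<phi> e))" if "e \<in> E" for e
      unfolding \<phi>_def by (rule someI_ex) (use that E C in blast)
    have inj: "inj_on \<phi> E"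
    proof (rule inj_onI)
      fix e1 e2 assume e12: "e1 \<in> E" "e2 \<in> E" "\<phi> e1 = \<phi> e2"
      define c where "c = \<phi> e1"
      have c: "c \<in> X" "e1 \<in> ball c (d c)" "e2 \<in> ball c (d c)"
        using \<phi>[OF e12(1)] \<phi>[OF e12(2)] e12(3) C(1) unfolding c_def by auto
      have "word_dist g w e1 e2 < \<epsilon>"
      proof (rule dist_lt)
        fix j assume j: "j \<le> length w"
        have "dist (word_orbit g w j e1) (word_orbit g w j c) < \<epsilon>/2"
          using d(2)[OF c(1) _ _ j, of e1] c E e12 by (auto simp: dist_commute)
        moreover have "dist (word_orbit g w j e2) (word_orbit g w j c) < \<epsilon>/2"
          using d(2)[OF c(1) _ _ j, of e2] c E e12 by (auto simp: dist_commute)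
        ultimately show "dist (word_orbit g w j e1) (word_orbit g w j e2) < \<epsilon>"
          using dist_triangle_half_l by blast
      qed
      then show "e1 = e2" using sep e12 unfolding word_separated_def by force
    qed
    have sub: "\<phi> ` E \<subseteq> C" using \<phi> by auto
    show "finite E \<and> card E \<le> card C"
      using inj sub C(2) by (meson card_inj_on_le finite_imageD finite_subset)
  qed
qed

lemma words_set: "w \<in> words p n \<Longrightarrow> set w \<subseteq> {0..<p}"
  by (simp add: words_def)

lemma sep_sub: "word_separated g w \<epsilon> E \<Longrightarrow> F \<subseteq> E \<Longrightarrow> word_separated g w \<epsilon> F"
  unfolding word_separated_def by auto

lemma sep_eps: "word_separated g w e2 E \<Longrightarrow> e1 \<le> e2 \<Longrightarrow> word_separated g w e1 E"
  unfolding word_separated_def by (auto intro: le_less_trans)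

lemma SS_ne: "{card E | E. finite E \<and> E \<subseteq> A \<and> word_separated g w \<epsilon> E} \<noteq> {}"
proof -
  have "card {} \<in> {card E | E. finite E \<and> E \<subseteq> A \<and> word_separated g w \<epsilon> E}"
    unfolding word_separated_def by (rule CollectI, rule exI[of _ "{}"]) simp
  then show ?thesis by auto
qed

lemma SS_bdd:
  assumes "A \<subseteq> X" "\<epsilon> > 0" "set w \<subseteq> {0..<p}"
  shows "bdd_above {card E | E. finite E \<and> E \<subseteq> A \<and> word_separated g w \<epsilon> E}"
proof -
  obtain M where M: "\<forall>E. E \<subseteq> X \<longrightarrow> word_separated g w \<epsilon> E \<longrightarrow> finite E \<and> card E \<le> M"
    using sep_bound[OF assms(3,2)] by blast
  show ?thesis
  proof (rule bdd_aboveI[of _ M])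
    fix x assume "x \<in> {card E | E. finite E \<and> E \<subseteq> A \<and> word_separated g w \<epsilon> E}"
    then obtain E where "x = card E" "E \<subseteq> A" "word_separated g w \<epsilon> E" by blast
    then show "x \<le> M" using M assms(1) by auto
  qed
qed

lemma sc_upper:
  assumes "A \<subseteq> X" "\<epsilon> > 0" "set w \<subseteq> {0..<p}" "finite E" "E \<subseteq> A" "word_separated g w \<epsilon> E"
  shows "card E \<le> sep_card g A w \<epsilon>"
  unfolding sep_card_def by (rule cSup_upper) (use assms SS_bdd[OF assms(1-3)] in auto)

lemma sc_least:
  assumes "\<And>E. finite E \<Longrightarrow> E \<subseteq> A \<Longrightarrow> word_separated g w \<epsilon> E \<Longrightarrow> card E \<le> z"
  shows "sep_card g A w \<epsilon> \<le> z"
  unfolding sep_card_def by (rule cSup_least) (use assms SS_ne in auto)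

lemma sc_mono_set:
  assumes "A \<subseteq> B" "B \<subseteq> X" "\<epsilon> > 0" "set w \<subseteq> {0..<p}"
  shows "sep_card g A w \<epsilon> \<le> sep_card g B w \<epsilon>"
  by (rule sc_least, rule sc_upper) (use assms in auto)

lemma sc_mono_eps:
  assumes "A \<subseteq> X" "0 < e1" "e1 \<le> e2" "set w \<subseteq> {0..<p}"
  shows "sep_card g A w e2 \<le> sep_card g A w e1"
  by (rule sc_least, rule sc_upper) (use assms sep_eps in auto)

lemma sc_un:
  assumes "A \<subseteq> X" "B \<subseteq> X" "\<epsilon> > 0" "set w \<subseteq> {0..<p}"
  shows "sep_card g (A \<union> B) w \<epsilon> \<le> sep_card g A w \<epsilon> + sep_card g B w \<epsilon>"
proof (rule sc_least)
  fix E assume E: "finite E" "E \<subseteq> A \<union> B" "word_separated g w \<epsilon> E"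
  have "E = (E \<inter> A) \<union> (E \<inter> B)" using E by auto
  then have "card E \<le> card (E \<inter> A) + card (E \<inter> B)" by (metis card_Un_le)
  also have "card (E \<inter> A) \<le> sep_card g A w \<epsilon>"
    by (rule sc_upper) (use assms E sep_sub[OF E(3)] in auto)
  also have "card (E \<inter> B) \<le> sep_card g B w \<epsilon>"
    by (rule sc_upper) (use assms E sep_sub[OF E(3)] in auto)
  finally show "card E \<le> sep_card g A w \<epsilon> + sep_card g B w \<epsilon>" by simp
qed

lemma sc_pos:
  assumes "x \<in> A" "A \<subseteq> X" "\<epsilon> > 0" "set w \<subseteq> {0..<p}"
  shows "1 \<le> sep_card g A w \<epsilon>"
proof -
  have "card {x} \<le> sep_card g A w \<epsilon>"
    by (rule sc_upper) (use assms in \<open>auto simp: word_separated_def\<close>)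
  then show ?thesis by simp
qed

lemma sc_empty: "sep_card g {} w \<epsilon> = 0"
proof -
  have "{card E | E. finite E \<and> E \<subseteq> {} \<and> word_separated g w \<epsilon> E} = {0}"
    by (auto simp: word_separated_def)
  then show ?thesis unfolding sep_card_def by simp
qed

lemma xv_nonneg: "0 \<le> xv g p A n \<epsilon>"
  unfolding xv_def by (intro mult_nonneg_nonneg sum_nonneg) auto

lemma xv_mono:
  assumes "A \<subseteq> B" "B \<subseteq> X" "\<epsilon> > 0"
  shows "xv g p A n \<epsilon> \<le> xv g p B n \<epsilon>"
  unfolding xv_def
  by (intro mult_left_mono sum_mono) (use assms sc_mono_set words_set in auto)

lemma xv_mono_eps:
  assumes "A \<subseteq> X" "0 < e1" "e1 \<le> e2"
  shows "xv g p A n e2 \<le> xv g p A n e1"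
  unfolding xv_def
  by (intro mult_left_mono sum_mono) (use assms sc_mono_eps words_set in auto)

lemma xv_un:
  assumes "A \<subseteq> X" "B \<subseteq> X" "\<epsilon> > 0"
  shows "xv g p (A \<union> B) n \<epsilon> \<le> xv g p A n \<epsilon> + xv g p B n \<epsilon>"
proof -
  have "(\<Sum>w\<in>words p n. real (sep_card g (A \<union> B) w \<epsilon>)) \<le>
        (\<Sum>w\<in>words p n. real (sep_card g A w \<epsilon>) + real (sep_card g B w \<epsilon>))"
  proof (rule sum_mono)
    fix w assume "w \<in> words p n"
    then have "sep_card g (A \<union> B) w \<epsilon> \<le> sep_card g A w \<epsilon> + sep_card g B w \<epsilon>"
      using sc_un assms words_set by blast
    then show "real (sep_card g (A \<union> B) w \<epsilon>) \<le> real (sep_card g A w \<epsilon>) + real (sep_card g B w \<epsilon>)"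
      by linarith
  qed
  then show ?thesis unfolding xv_def sum.distrib distrib_left[symmetric]
    by (intro mult_left_mono) auto
qed

lemma xv_ge1:
  assumes "A \<noteq> {}" "A \<subseteq> X" "\<epsilon> > 0"
  shows "1 \<le> xv g p A n \<epsilon>"
proof -
  obtain x where x: "x \<in> A" using assms by auto
  have "real (p ^ n) = (\<Sum>w\<in>words p n. 1)" by (simp add: words_card)
  also have "\<dots> \<le> (\<Sum>w\<in>words p n. real (sep_card g A w \<epsilon>))"
    by (rule sum_mono) (use sc_pos[OF x assms(2,3)] words_set in auto)
  finally have le: "real p ^ n \<le> (\<Sum>w\<in>words p n. real (sep_card g A w \<epsilon>))" by simp
  have pos: "real p ^ n > 0" using p1 by simp
  show ?thesis unfolding xv_def using le pos by (simp add: field_simps)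
qed

lemma xv_empty: "xv g p {} n \<epsilon> = 0"
  unfolding xv_def by (simp add: sc_empty)

lemma Fe_mono_set:
  assumes "A \<subseteq> B" "B \<subseteq> X" "\<epsilon> > 0"
  shows "Fe g p A \<epsilon> \<le> Fe g p B \<epsilon>"
  unfolding Fe_def aa_def
  by (intro Limsup_mono always_eventually allI ereal_mult_left_mono eln_mono xv_mono assms) auto

lemma Fe_anti:
  assumes "A \<subseteq> X" "0 < e1" "e1 \<le> e2"
  shows "Fe g p A e2 \<le> Fe g p A e1"
  unfolding Fe_def aa_def
  by (intro Limsup_mono always_eventually allI ereal_mult_left_mono eln_mono xv_mono_eps assms) auto

lemma Fe_un:
  assumes "A \<subseteq> X" "B \<subseteq> X" "\<epsilon> > 0"
  shows "Fe g p (A \<union> B) \<epsilon> \<le> max (Fe g p A \<epsilon>) (Fe g p B \<epsilon>)"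
proof -
  have "Fe g p (A \<union> B) \<epsilon> \<le> limsup (\<lambda>n. ereal (ln 2 / real n) + max (aa g p A \<epsilon> n) (aa g p B \<epsilon> n))"
    unfolding Fe_def
  proof (intro Limsup_mono eventually_sequentiallyI)
    fix n :: nat assume n: "n \<ge> 1"
    show "aa g p (A \<union> B) \<epsilon> n \<le> ereal (ln 2 / real n) + max (aa g p A \<epsilon> n) (aa g p B \<epsilon> n)"
      unfolding aa_def using aa_un[OF n xv_un[OF assms] xv_nonneg xv_nonneg] by simp
  qed
  also have "\<dots> \<le> limsup (\<lambda>n. ereal (ln 2 / real n)) + limsup (\<lambda>n. max (aa g p A \<epsilon> n) (aa g p B \<epsilon> n))"
    by (rule ereal_limsup_add_mono)
  also have "\<dots> = limsup (\<lambda>n. max (aa g p A \<epsilon> n) (aa g p B \<epsilon> n))"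
    by (simp add: limsup_ln2)
  also have "\<dots> \<le> max (Fe g p A \<epsilon>) (Fe g p B \<epsilon>)"
    unfolding Fe_def by (rule limsup_max_le)
  finally show ?thesis .
qed

lemma Fe_empty: "Fe g p {} \<epsilon> = -\<infinity>"
proof -
  have "Fe g p {} \<epsilon> \<le> -\<infinity>"
    unfolding Fe_def
  proof (intro Limsup_bounded eventually_sequentiallyI)
    fix n :: nat assume n: "n \<ge> 1"
    show "aa g p {} \<epsilon> n \<le> -\<infinity>" unfolding aa_def xv_empty using aa_npos[OF n, of 0] by simp
  qed
  then show ?thesis by simp
qed

lemma Fe_X:
  assumes "X \<noteq> {}"
  shows "0 \<le> Fe g p X 1"
  unfolding Fe_def
proof (intro le_Limsup eventually_sequentiallyI)
  show "sequentially \<noteq> bot" by simp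
  fix n :: nat assume n: "n \<ge> 1"
  have x: "1 \<le> xv g p X n 1" by (rule xv_ge1) (use assms in auto)
  then have "0 \<le> ln (xv g p X n 1) / real n" by simp
  then show "0 \<le> aa g p X 1 n" unfolding aa_def using aa_pos[OF n] x by simp
qed

lemma h_eq:
  assumes "A \<subseteq> X"
  shows "top_entropy g p A = (SUP e\<in>{0<..}. Fe g p A e)"
  unfolding top_Fe by (rule Lim_antitone) (use Fe_anti assms in auto)

lemma h_mono:
  assumes "A \<subseteq> B" "B \<subseteq> X"
  shows "top_entropy g p A \<le> top_entropy g p B"
  unfolding h_eq[OF assms(2)] h_eq[OF order_trans[OF assms]]
  by (rule SUP_mono) (use Fe_mono_set assms in auto)

lemma h_un:
  assumes "A \<subseteq> X" "B \<subseteq> X"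
  shows "top_entropy g p (A \<union> B) \<le> max (top_entropy g p A) (top_entropy g p B)"
proof -
  have "Fe g p (A \<union> B) e \<le> max (top_entropy g p A) (top_entropy g p B)" if e: "e > 0" for e
  proof -
    have "Fe g p A e \<le> top_entropy g p A" unfolding h_eq[OF assms(1)] using e by (auto intro: SUP_upper)
    moreover have "Fe g p B e \<le> top_entropy g p B" unfolding h_eq[OF assms(2)] using e by (auto intro: SUP_upper)
    ultimately have "max (Fe g p A e) (Fe g p B e) \<le> max (top_entropy g p A) (top_entropy g p B)"
      by (rule max.mono)
    then show ?thesis using Fe_un[OF assms e] by (rule order_trans[rotated])
  qed
  then show ?thesis unfolding h_eq[OF Un_least[OF assms]] by (auto intro: SUP_least)
qed

lemma h_empty: "top_entropy g p {} = -\<infinity>"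
  unfolding h_eq[OF empty_subsetI] Fe_empty by simp

lemma h_X: "X \<noteq> {} \<Longrightarrow> 0 \<le> top_entropy g p X"
  unfolding h_eq[OF order_refl] using Fe_X by (auto intro: SUP_upper2[of 1])

lemma h_Union:
  assumes "finite C" "C \<noteq> {}" "\<forall>c\<in>C. N c \<subseteq> X"
  shows "top_entropy g p (\<Union>c\<in>C. N c) \<le> Max ((\<lambda>c. top_entropy g p (N c)) ` C)"
  using assms
proof (induction C rule: finite_ne_induct)
  case (singleton x) then show ?case by simp
next
  case (insert x F)
  have "top_entropy g p (\<Union>c\<in>insert x F. N c) = top_entropy g p (N x \<union> (\<Union>c\<in>F. N c))" by simp
  also have "\<dots> \<le> max (top_entropy g p (N x)) (top_entropy g p (\<Union>c\<in>F. N c))"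
    by (rule h_un) (use insert.prems in auto)
  also have "\<dots> \<le> max (top_entropy g p (N x)) (Max ((\<lambda>c. top_entropy g p (N c)) ` F))"
    using insert by (intro max.mono) auto
  also have "\<dots> = Max ((\<lambda>c. top_entropy g p (N c)) ` insert x F)"
    using insert by simp
  finally show ?case .
qed

end

lemma cover_lemma:
  fixes X K :: "'a::metric_space set"
  assumes "K \<subseteq> X" "compact K" "K \<noteq> {}" "\<forall>x\<in>K. \<exists>N. closed_nbhd X x N \<and> P N"
  obtains C N where "finite C" "C \<noteq> {}" "\<forall>c\<in>C. closed_nbhd X c (N c) \<and> P (N c)"
    "K \<subseteq> (\<Union>c\<in>C. N c)"
proof -
  obtain N where N: "\<forall>x\<in>K. closed_nbhd X x (N x) \<and> P (N x)" using bchoice[OF assms(4)] by blast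
  have he: "\<forall>x\<in>K. \<exists>e>0. X \<inter> ball x e \<subseteq> N x" using N unfolding closed_nbhd_def by blast
  obtain e where e: "\<forall>x\<in>K. e x > 0 \<and> X \<inter> ball x (e x) \<subseteq> N x" using bchoice[OF he] by blast
  have "K \<subseteq> (\<Union>x\<in>K. ball x (e x))" using e by auto
  then obtain C where C: "C \<subseteq> K" "finite C" "K \<subseteq> (\<Union>x\<in>C. ball x (e x))"
    using compactE_image[OF assms(2), of K "\<lambda>x. ball x (e x)"] by auto
  show ?thesis
  proof
    show "finite C" by fact
    show "C \<noteq> {}" using C(3) assms(3) by auto
    show "\<forall>c\<in>C. closed_nbhd X c (N c) \<and> P (N c)" using C(1) N by auto
    show "K \<subseteq> (\<Union>c\<in>C. N c)"
    proof
      fix x assume x: "x \<in> K"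
      then obtain c where c: "c \<in> C" "x \<in> ball c (e c)" using C(3) by auto
      have "X \<inter> ball c (e c) \<subseteq> N c" using e C(1) c(1) by auto
      moreover have "x \<in> X \<inter> ball c (e c)" using x assms(1) c(2) by auto
      ultimately have "x \<in> N c" by blast
      then show "x \<in> (\<Union>c\<in>C. N c)" using c by auto
    qed
  qed
qed

theorem mainTheorem8:
  fixes X K :: "'a::metric_space set" and g :: "nat \<Rightarrow> 'a \<Rightarrow> 'a" and p :: nat
  assumes "compact X" and "X \<noteq> {}" and "p \<ge> 1"
    and "\<And>i. i < p \<Longrightarrow> continuous_on X (g i)"
    and "\<And>i. i < p \<Longrightarrow> g i ` X \<subseteq> X"
    and "closed K" and "K \<subseteq> X"
  shows "(top_entropy g p K > 0 \<longrightarrow> K \<inter> entropy_points X g p \<noteq> {})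
       \<and> (top_entropy g p K = top_entropy g p X \<longrightarrow> K \<inter> full_entropy_points X g p \<noteq> {})"
proof -
  interpret S: setting X g p by unfold_locales (use assms in auto)
  have Kc: "compact K" using compact_Int_closed[OF assms(1,6)] assms(7) by (simp add: Int_absorb1)
  have hX: "0 \<le> top_entropy g p X" using S.h_X assms(2) by blast
  have part1: "K \<inter> entropy_points X g p \<noteq> {}" if pos: "top_entropy g p K > 0"
  proof
    assume empty: "K \<inter> entropy_points X g p = {}"
    have Kne: "K \<noteq> {}" using pos S.h_empty by auto
    have ex: "\<forall>x\<in>K. \<exists>N. closed_nbhd X x N \<and> top_entropy g p N \<le> 0"
    proof
      fix x assume x: "x \<in> K"
      then have "x \<notin> entropy_points X g p" using empty by auto
      then show "\<exists>N. closed_nbhd X x N \<and> top_entropy g p N \<le> 0"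
        using x assms(7) unfolding entropy_points_def by (auto simp: not_less)
    qed
    obtain C N where C: "finite C" "C \<noteq> {}"
      "\<forall>c\<in>C. closed_nbhd X c (N c) \<and> top_entropy g p (N c) \<le> 0" "K \<subseteq> (\<Union>c\<in>C. N c)"
      using cover_lemma[OF assms(7) Kc Kne ex] by blast
    have NX: "\<forall>c\<in>C. N c \<subseteq> X" using C(3) unfolding closed_nbhd_def by blast
    have "top_entropy g p K \<le> top_entropy g p (\<Union>c\<in>C. N c)"
      by (rule S.h_mono) (use C(4) NX in auto)
    also have "\<dots> \<le> Max ((\<lambda>c. top_entropy g p (N c)) ` C)"
      by (rule S.h_Union) (use C NX in auto)
    also have "\<dots> \<le> 0" using C by (subst Max_le_iff) auto
    finally show False using pos by simp
  qed
  have part2: "K \<inter> full_entropy_points X g p \<noteq> {}" if eq: "top_entropy g p K = top_entropy g p X"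
  proof
    assume empty: "K \<inter> full_entropy_points X g p = {}"
    have Kne: "K \<noteq> {}"
    proof
      assume "K = {}"
      then have "top_entropy g p X = -\<infinity>" using eq S.h_empty by simp
      then show False using hX by simp
    qed
    have ex: "\<forall>x\<in>K. \<exists>N. closed_nbhd X x N \<and> top_entropy g p N < top_entropy g p X"
    proof
      fix x assume x: "x \<in> K"
      then have "x \<notin> full_entropy_points X g p" using empty by auto
      then obtain N where N: "closed_nbhd X x N" "top_entropy g p N \<noteq> top_entropy g p X"
        using x assms(7) unfolding full_entropy_points_def by auto
      have "top_entropy g p N \<le> top_entropy g p X"
        by (rule S.h_mono) (use N(1) in \<open>auto simp: closed_nbhd_def\<close>)
      then show "\<exists>N. closed_nbhd X x N \<and> top_entropy g p N < top_entropy g p X"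
        using N by auto
    qed
    obtain C N where C: "finite C" "C \<noteq> {}"
      "\<forall>c\<in>C. closed_nbhd X c (N c) \<and> top_entropy g p (N c) < top_entropy g p X" "K \<subseteq> (\<Union>c\<in>C. N c)"
      using cover_lemma[OF assms(7) Kc Kne ex] by blast
    have NX: "\<forall>c\<in>C. N c \<subseteq> X" using C(3) unfolding closed_nbhd_def by blast
    have "top_entropy g p K \<le> top_entropy g p (\<Union>c\<in>C. N c)"
      by (rule S.h_mono) (use C(4) NX in auto)
    also have "\<dots> \<le> Max ((\<lambda>c. top_entropy g p (N c)) ` C)"
      by (rule S.h_Union) (use C NX in auto)
    also have "\<dots> < top_entropy g p X" using C by (subst Max_less_iff) auto
    finally show False using eq by simp
  qed
  show ?thesis using part1 part2 by blast
qed

end
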